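(* Let $(\Omega,+)$ be a group, $b$ a subgroup and $y\subseteq\Omega$ with $y\top b$. Then the set ${}^\top b=\{x\subseteq\Omega:x\top b\}$ is stable under the ternary law $(x,u,z)\mapsto\Sigma(b,x,u,z)$ and with the induced law is a torsor, denoted $U_b$; and there are natural torsor isomorphisms between: (1) $U_b$; (2) the set of (images of) sections $\sigma:\Omega/b\to\Omega$ of the canonical projection $\Omega\to\Omega/b$ onto left cosets, with pointwise torsor law $(\sigma\sigma'\sigma'')(u)=\sigma(u)-\sigma'(u)+\sigma''(u)$; (3) the set $\mathrm{Map}(y,b)$ of maps $y\to b$ with pointwise torsor law $(F,F',F'')\mapsto F-F'+F''$. (The isomorphism (2)$\to$(1) sends $\sigma$ to its image; (3)$\to$(1) sends $F$ to $\{\eta+F(\eta):\eta\in y\}$.) Similarly, the set $b^\top=\{x:b\top x\}$, denoted $\check U_b$, is a torsor which can be identified with the set of sections of the projection $\Omega\to b\backslash\Omega$ onto right cosets, with its pointwise torsor structure.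
   Context: $(\Omega,+)$ is a group written additively but not necessarily abelian. For subsets $x,y$, $x\top y$ means every $\omega\in\Omega$ has a unique decomposition $\omega=\xi+\eta$ with $\xi\in x,\eta\in y$. $\Sigma(b,x,u,z)=\{\omega:\exists\beta,\beta'\in b:\ \omega+\beta\in x,\ \omega+\beta'+\beta\in u,\ \omega+\beta'\in z\}$. A torsor is a set $G$ with a map $(x,y,z)\mapsto(xyz)$ satisfying $(xy(zuv))=(x(uzy)v)=((xyz)uv)$ and $(xxy)=y=(yxx)$. *)

theory Defs
  imports "HOL-Library.FuncSet"
begin

text \<open>The group \<Omega> is the whole type 'a of class group_add (not necessarily abelian).\<close>

definition subgrp :: "'a::group_add set \<Rightarrow> bool" where
  "subgrp b \<longleftrightarrow> 0 \<in> b \<and> (\<forall>x\<in>b. \<forall>y\<in>b. x + y \<in> b) \<and> (\<forall>x\<in>b. - x \<in> b)"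

definition top :: "'a::group_add set \<Rightarrow> 'a set \<Rightarrow> bool" where
  "top x y \<longleftrightarrow> (\<forall>\<omega>. \<exists>!p. fst p \<in> x \<and> snd p \<in> y \<and> \<omega> = fst p + snd p)"

definition Sigma_law :: "'a::group_add set \<Rightarrow> 'a set \<Rightarrow> 'a set \<Rightarrow> 'a set \<Rightarrow> 'a set" where
  "Sigma_law b x u z = {\<omega>. \<exists>\<beta>\<in>b. \<exists>\<beta>'\<in>b. \<omega> + \<beta> \<in> x \<and> \<omega> + \<beta>' + \<beta> \<in> u \<and> \<omega> + \<beta>' \<in> z}"

definition torsor_on :: "'g set \<Rightarrow> ('g \<Rightarrow> 'g \<Rightarrow> 'g \<Rightarrow> 'g) \<Rightarrow> bool" where
  "torsor_on G m \<longleftrightarrow>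
     (\<forall>x\<in>G. \<forall>y\<in>G. \<forall>z\<in>G. m x y z \<in> G) \<and>
     (\<forall>x\<in>G. \<forall>y\<in>G. \<forall>z\<in>G. \<forall>u\<in>G. \<forall>v\<in>G.
        m x y (m z u v) = m x (m u z y) v \<and> m x (m u z y) v = m (m x y z) u v) \<and>
     (\<forall>x\<in>G. \<forall>y\<in>G. m x x y = y \<and> m y x x = y)"

definition torsor_iso ::
  "'g set \<Rightarrow> ('g \<Rightarrow> 'g \<Rightarrow> 'g \<Rightarrow> 'g) \<Rightarrow> 'h set \<Rightarrow> ('h \<Rightarrow> 'h \<Rightarrow> 'h \<Rightarrow> 'h) \<Rightarrow> ('g \<Rightarrow> 'h) \<Rightarrow> bool" where
  "torsor_iso G m H n f \<longleftrightarrow> bij_betw f G H \<and>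
     (\<forall>x\<in>G. \<forall>y\<in>G. \<forall>z\<in>G. f (m x y z) = n (f x) (f y) (f z))"

definition left_cosets :: "'a::group_add set \<Rightarrow> 'a set set" where
  "left_cosets b = {(\<lambda>\<beta>. \<omega> + \<beta>) ` b | \<omega>. True}"

definition right_cosets :: "'a::group_add set \<Rightarrow> 'a set set" where
  "right_cosets b = {(\<lambda>\<beta>. \<beta> + \<omega>) ` b | \<omega>. True}"

text \<open>Sections of the canonical projection \<Omega> \<rightarrow> Q (Q a set of cosets partitioning \<Omega>),
  i.e. maps \<sigma> : Q \<rightarrow> \<Omega> with \<sigma>(C) \<in> C (so that \<pi>(\<sigma>(C)) = C), represented extensionally.\<close>
definition sections :: "'a set set \<Rightarrow> ('a set \<Rightarrow> 'a) set" where
  "sections Q = {\<sigma> \<in> Q \<rightarrow>\<^sub>E UNIV. \<forall>C\<in>Q. \<sigma> C \<in> C}"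

definition pointwise_law :: "'c set \<Rightarrow> ('c \<Rightarrow> 'a::group_add) \<Rightarrow> ('c \<Rightarrow> 'a) \<Rightarrow> ('c \<Rightarrow> 'a) \<Rightarrow> ('c \<Rightarrow> 'a)" where
  "pointwise_law D f g h = (\<lambda>c\<in>D. f c - g c + h c)"

end

theory Submission
  imports Defs
begin


lemma top_char_l: "top x y \<longleftrightarrow> (\<forall>\<omega>. \<exists>!\<xi>. \<xi> \<in> x \<and> - \<xi> + \<omega> \<in> y)"
proof -
  have "(\<exists>!p. fst p \<in> x \<and> snd p \<in> y \<and> \<omega> = fst p + snd p) \<longleftrightarrow> (\<exists>!\<xi>. \<xi> \<in> x \<and> - \<xi> + \<omega> \<in> y)" for \<omega>
  proof
    assume "\<exists>!p. fst p \<in> x \<and> snd p \<in> y \<and> \<omega> = fst p + snd p"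
    then obtain p where p: "fst p \<in> x \<and> snd p \<in> y \<and> \<omega> = fst p + snd p"
      and u: "\<And>q. fst q \<in> x \<and> snd q \<in> y \<and> \<omega> = fst q + snd q \<Longrightarrow> q = p" by metis
    show "\<exists>!\<xi>. \<xi> \<in> x \<and> - \<xi> + \<omega> \<in> y"
    proof (rule ex1I[of _ "fst p"])
      show "fst p \<in> x \<and> - fst p + \<omega> \<in> y" using p by (simp add: add.assoc[symmetric])
      fix \<xi> assume "\<xi> \<in> x \<and> - \<xi> + \<omega> \<in> y"
      then have "(\<xi>, - \<xi> + \<omega>) = p" by (intro u) (simp add: add.assoc[symmetric])
      then show "\<xi> = fst p" by auto
    qed
  next
    assume "\<exists>!\<xi>. \<xi> \<in> x \<and> - \<xi> + \<omega> \<in> y"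
    then obtain \<xi> where p: "\<xi> \<in> x \<and> - \<xi> + \<omega> \<in> y"
      and u: "\<And>q. q \<in> x \<and> - q + \<omega> \<in> y \<Longrightarrow> q = \<xi>" by metis
    show "\<exists>!p. fst p \<in> x \<and> snd p \<in> y \<and> \<omega> = fst p + snd p"
    proof (rule ex1I[of _ "(\<xi>, - \<xi> + \<omega>)"])
      show "fst (\<xi>, - \<xi> + \<omega>) \<in> x \<and> snd (\<xi>, - \<xi> + \<omega>) \<in> y \<and> \<omega> = fst (\<xi>, - \<xi> + \<omega>) + snd (\<xi>, - \<xi> + \<omega>)"
        using p by (simp add: add.assoc[symmetric])
      fix q assume q: "fst q \<in> x \<and> snd q \<in> y \<and> \<omega> = fst q + snd q"
      then have "fst q = \<xi>" by (intro u) (simp add: add.assoc[symmetric])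
      moreover have "snd q = - fst q + \<omega>" using q by (simp add: add.assoc[symmetric])
      ultimately show "q = (\<xi>, - \<xi> + \<omega>)" by (metis prod.collapse)
    qed
  qed
  then show ?thesis unfolding top_def by simp
qed

lemma top_char_r: "top y x \<longleftrightarrow> (\<forall>\<omega>. \<exists>!\<xi>. \<xi> \<in> x \<and> \<omega> + - \<xi> \<in> y)"
proof -
  have "(\<exists>!p. fst p \<in> y \<and> snd p \<in> x \<and> \<omega> = fst p + snd p) \<longleftrightarrow> (\<exists>!\<xi>. \<xi> \<in> x \<and> \<omega> + - \<xi> \<in> y)" for \<omega>
  proof
    assume "\<exists>!p. fst p \<in> y \<and> snd p \<in> x \<and> \<omega> = fst p + snd p"
    then obtain p where p: "fst p \<in> y \<and> snd p \<in> x \<and> \<omega> = fst p + snd p"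
      and u: "\<And>q. fst q \<in> y \<and> snd q \<in> x \<and> \<omega> = fst q + snd q \<Longrightarrow> q = p" by metis
    show "\<exists>!\<xi>. \<xi> \<in> x \<and> \<omega> + - \<xi> \<in> y"
    proof (rule ex1I[of _ "snd p"])
      show "snd p \<in> x \<and> \<omega> + - snd p \<in> y" using p by (simp add: add.assoc)
      fix \<xi> assume "\<xi> \<in> x \<and> \<omega> + - \<xi> \<in> y"
      then have "(\<omega> + - \<xi>, \<xi>) = p" by (intro u) (simp add: add.assoc)
      then show "\<xi> = snd p" by auto
    qed
  next
    assume "\<exists>!\<xi>. \<xi> \<in> x \<and> \<omega> + - \<xi> \<in> y"
    then obtain \<xi> where p: "\<xi> \<in> x \<and> \<omega> + - \<xi> \<in> y"
      and u: "\<And>q. q \<in> x \<and> \<omega> + - q \<in> y \<Longrightarrow> q = \<xi>" by metis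
    show "\<exists>!p. fst p \<in> y \<and> snd p \<in> x \<and> \<omega> = fst p + snd p"
    proof (rule ex1I[of _ "(\<omega> + - \<xi>, \<xi>)"])
      show "fst (\<omega> + - \<xi>, \<xi>) \<in> y \<and> snd (\<omega> + - \<xi>, \<xi>) \<in> x \<and> \<omega> = fst (\<omega> + - \<xi>, \<xi>) + snd (\<omega> + - \<xi>, \<xi>)"
        using p by (simp add: add.assoc)
      fix q assume q: "fst q \<in> y \<and> snd q \<in> x \<and> \<omega> = fst q + snd q"
      then have "snd q = \<xi>" by (intro u) (simp add: add.assoc)
      moreover have "fst q = \<omega> + - snd q" using q by (simp add: add.assoc)
      ultimately show "q = (\<omega> + - \<xi>, \<xi>)" by (metis prod.collapse)
    qed
  qed
  then show ?thesis unfolding top_def by simp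
qed

lemma transport:
  assumes "torsor_on G m" "torsor_iso G m H n f"
  shows "torsor_on H n"
proof -
  have b: "bij_betw f G H" and h: "\<And>x y z. x\<in>G \<Longrightarrow> y\<in>G \<Longrightarrow> z\<in>G \<Longrightarrow> f (m x y z) = n (f x) (f y) (f z)"
    using assms(2) unfolding torsor_iso_def by auto
  have cl: "\<And>x y z. x\<in>G \<Longrightarrow> y\<in>G \<Longrightarrow> z\<in>G \<Longrightarrow> m x y z \<in> G"
    and a1: "\<And>x y z u v. x\<in>G \<Longrightarrow> y\<in>G \<Longrightarrow> z\<in>G \<Longrightarrow> u\<in>G \<Longrightarrow> v\<in>G \<Longrightarrow> m x y (m z u v) = m x (m u z y) v"
    and a2: "\<And>x y z u v. x\<in>G \<Longrightarrow> y\<in>G \<Longrightarrow> z\<in>G \<Longrightarrow> u\<in>G \<Longrightarrow> v\<in>G \<Longrightarrow> m x (m u z y) v = m (m x y z) u v"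
    and a3: "\<And>x y. x\<in>G \<Longrightarrow> y\<in>G \<Longrightarrow> m x x y = y \<and> m y x x = y"
    using assms(1) unfolding torsor_on_def by blast+
  have img: "H = f ` G" using b by (simp add: bij_betw_def)
  show ?thesis unfolding torsor_on_def img
    by (auto simp: h[symmetric] cl a1 a3 intro!: imageI) (metis a2 cl h)
qed

lemma iso_comp:
  assumes "torsor_iso G m H n f" "torsor_iso H n K k g" "\<forall>x\<in>G. m' x = g (f x)"
    and cl: "\<And>x y z. x\<in>G \<Longrightarrow> y\<in>G \<Longrightarrow> z\<in>G \<Longrightarrow> m x y z \<in> G"
  shows "torsor_iso G m K k m'"
proof -
  have bf: "bij_betw f G H" and hf: "\<And>x y z. x\<in>G \<Longrightarrow> y\<in>G \<Longrightarrow> z\<in>G \<Longrightarrow> f (m x y z) = n (f x) (f y) (f z)"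
    using assms(1) unfolding torsor_iso_def by auto
  have bg: "bij_betw g H K" and hg: "\<And>x y z. x\<in>H \<Longrightarrow> y\<in>H \<Longrightarrow> z\<in>H \<Longrightarrow> g (n x y z) = k (g x) (g y) (g z)"
    using assms(2) unfolding torsor_iso_def by auto
  have fH: "\<And>x. x \<in> G \<Longrightarrow> f x \<in> H" using bf by (auto simp: bij_betw_def)
  have "bij_betw (g \<circ> f) G K" using bf bg by (auto intro: bij_betw_trans)
  then have "bij_betw m' G K" using assms(3) by (metis (no_types, lifting) bij_betw_cong comp_apply)
  moreover have "\<forall>x\<in>G. \<forall>y\<in>G. \<forall>z\<in>G. m' (m x y z) = k (m' x) (m' y) (m' z)"
    using assms(3) by (simp add: cl hf hg fH)
  ultimately show ?thesis unfolding torsor_iso_def by blast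
qed

lemma pointwise_torsor:
  fixes S :: "('c \<Rightarrow> 'a::group_add) set"
  assumes "S \<subseteq> extensional D" "\<And>f g h. f\<in>S \<Longrightarrow> g\<in>S \<Longrightarrow> h\<in>S \<Longrightarrow> pointwise_law D f g h \<in> S"
  shows "torsor_on S (pointwise_law D)"
  unfolding torsor_on_def
proof (intro conjI ballI)
  fix x y z assume "x\<in>S" "y\<in>S" "z\<in>S" then show "pointwise_law D x y z \<in> S" by (rule assms(2))
next
  fix x y z u v :: "'c \<Rightarrow> 'a"
  show "pointwise_law D x y (pointwise_law D z u v) = pointwise_law D x (pointwise_law D u z y) v"
    by (rule ext) (simp add: pointwise_law_def diff_conv_add_uminus minus_add add.assoc del: add_uminus_conv_diff)
  show "pointwise_law D x (pointwise_law D u z y) v = pointwise_law D (pointwise_law D x y z) u v"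
    by (rule ext) (simp add: pointwise_law_def diff_conv_add_uminus minus_add add.assoc del: add_uminus_conv_diff)
next
  fix x y assume "x\<in>S" "y\<in>S"
  then have "x \<in> extensional D" "y \<in> extensional D" using assms(1) by auto
  then show "pointwise_law D x x y = y" "pointwise_law D y x x = y"
    by (auto simp: pointwise_law_def fun_eq_iff extensional_def)
qed



locale eqv =
  fixes R :: "'a \<Rightarrow> 'a \<Rightarrow> bool"
  assumes rf: "\<And>v. R v v" and sy: "\<And>v w. R v w \<Longrightarrow> R w v"
    and tr: "\<And>u v w. R u v \<Longrightarrow> R v w \<Longrightarrow> R u w"
begin

definition QQ :: "'a set set" where "QQ = {{w. R v w} | v. True}"

definition transv :: "'a set \<Rightarrow> bool" where "transv x \<longleftrightarrow> (\<forall>\<omega>. \<exists>!\<xi>. \<xi> \<in> x \<and> R \<xi> \<omega>)"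

lemma cls_eq: "R v w \<Longrightarrow> {u. R v u} = {u. R w u}"
  using sy tr by blast

lemma cls_in: "{w. R v w} \<in> QQ" unfolding QQ_def by blast

lemma inQ_cls: "C \<in> QQ \<Longrightarrow> v \<in> C \<Longrightarrow> C = {w. R v w}"
  unfolding QQ_def using cls_eq by auto

lemma transv_unique:
  assumes "transv x" "C \<in> QQ" shows "\<exists>!\<xi>. \<xi> \<in> x \<and> \<xi> \<in> C"
proof -
  obtain v where C: "C = {w. R v w}" using assms(2) unfolding QQ_def by blast
  have "\<xi> \<in> C \<longleftrightarrow> R \<xi> v" for \<xi> using C sy by blast
  then show ?thesis using assms(1) unfolding transv_def by simp
qed

lemma sec_in: "\<sigma> \<in> sections QQ \<Longrightarrow> C \<in> QQ \<Longrightarrow> \<sigma> C \<in> C"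
  unfolding sections_def by blast

lemma bij: "bij_betw (\<lambda>\<sigma>. \<sigma> ` QQ) (sections QQ) {x. transv x}"
  unfolding bij_betw_def
proof (intro conjI)
  show "inj_on (\<lambda>\<sigma>. \<sigma> ` QQ) (sections QQ)"
  proof (rule inj_onI)
    fix \<sigma> \<sigma>' assume s: "\<sigma> \<in> sections QQ" "\<sigma>' \<in> sections QQ" and e: "\<sigma> ` QQ = \<sigma>' ` QQ"
    show "\<sigma> = \<sigma>'"
    proof (rule ext)
      fix C show "\<sigma> C = \<sigma>' C"
      proof (cases "C \<in> QQ")
        case True
        then obtain C' where C': "C' \<in> QQ" "\<sigma> C = \<sigma>' C'" using e by (metis image_eqI imageE)
        have "C = {w. R (\<sigma> C) w}" using inQ_cls[OF True sec_in[OF s(1) True]] .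
        moreover have "C' = {w. R (\<sigma>' C') w}" using inQ_cls[OF C'(1) sec_in[OF s(2) C'(1)]] .
        ultimately show ?thesis using C' by simp
      next
        case False then show ?thesis using s unfolding sections_def by (auto simp: PiE_def extensional_def)
      qed
    qed
  qed
next
  show "(\<lambda>\<sigma>. \<sigma> ` QQ) ` sections QQ = {x. transv x}"
  proof (intro equalityI subsetI)
    fix x assume "x \<in> (\<lambda>\<sigma>. \<sigma> ` QQ) ` sections QQ"
    then obtain \<sigma> where s: "\<sigma> \<in> sections QQ" and x: "x = \<sigma> ` QQ" by blast
    have "\<exists>!\<xi>. \<xi> \<in> x \<and> R \<xi> \<omega>" for \<omega>
    proof (rule ex1I[of _ "\<sigma> {w. R \<omega> w}"])
      show "\<sigma> {w. R \<omega> w} \<in> x \<and> R (\<sigma> {w. R \<omega> w}) \<omega>"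
        using sec_in[OF s cls_in] x cls_in sy by blast
      fix \<xi> assume a: "\<xi> \<in> x \<and> R \<xi> \<omega>"
      then obtain C where C: "C \<in> QQ" "\<xi> = \<sigma> C" using x by blast
      have "C = {w. R \<xi> w}" using inQ_cls[OF C(1) sec_in[OF s C(1)]] C by simp
      also have "\<dots> = {w. R \<omega> w}" using cls_eq a by blast
      finally show "\<xi> = \<sigma> {w. R \<omega> w}" using C by simp
    qed
    then show "x \<in> {x. transv x}" unfolding transv_def by simp
  next
    fix x assume "x \<in> {x. transv x}"
    then have t: "transv x" by simp
    define \<sigma> where "\<sigma> = (\<lambda>C\<in>QQ. THE \<xi>. \<xi> \<in> x \<and> \<xi> \<in> C)"
    have th: "C \<in> QQ \<Longrightarrow> \<sigma> C \<in> x \<and> \<sigma> C \<in> C" for C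
      unfolding \<sigma>_def using theI'[OF transv_unique[OF t]] by simp
    have s: "\<sigma> \<in> sections QQ" unfolding sections_def using th by (auto simp: \<sigma>_def)
    have "\<sigma> ` QQ = x"
    proof
      show "\<sigma> ` QQ \<subseteq> x" using th by blast
      show "x \<subseteq> \<sigma> ` QQ"
      proof
        fix \<xi> assume "\<xi> \<in> x"
        moreover have "\<xi> \<in> {w. R \<xi> w}" using rf by simp
        ultimately have "\<sigma> {w. R \<xi> w} = \<xi>"
          unfolding \<sigma>_def using cls_in the1_equality[OF transv_unique[OF t cls_in]] by simp
        then show "\<xi> \<in> \<sigma> ` QQ" using cls_in by (metis image_eqI)
      qed
    qed
    then show "x \<in> (\<lambda>\<sigma>. \<sigma> ` QQ) ` sections QQ" using s by blast
  qed
qed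

lemma sections_ext: "sections QQ \<subseteq> extensional QQ"
  unfolding sections_def by (auto simp: PiE_def)

end



definition Rl :: "'a::group_add set \<Rightarrow> 'a \<Rightarrow> 'a \<Rightarrow> bool" where "Rl b v w \<longleftrightarrow> - v + w \<in> b"
definition Rr :: "'a::group_add set \<Rightarrow> 'a \<Rightarrow> 'a \<Rightarrow> bool" where "Rr b v w \<longleftrightarrow> w - v \<in> b"

lemma sg_add: "subgrp b \<Longrightarrow> x \<in> b \<Longrightarrow> y \<in> b \<Longrightarrow> x + y \<in> b" unfolding subgrp_def by blast
lemma sg_neg: "subgrp b \<Longrightarrow> x \<in> b \<Longrightarrow> - x \<in> b" unfolding subgrp_def by blast
lemma sg_0: "subgrp b \<Longrightarrow> 0 \<in> b" unfolding subgrp_def by blast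

lemma eqv_l: "subgrp b \<Longrightarrow> eqv (Rl b)"
  unfolding eqv_def Rl_def
proof (intro conjI allI impI)
  assume sg: "subgrp b"
  fix v w u
  show "- v + v \<in> b" using sg_0[OF sg] by simp
  show "- v + w \<in> b \<Longrightarrow> - w + v \<in> b" using sg_neg[OF sg, of "- v + w"] by (simp add: minus_add)
  show "- u + v \<in> b \<Longrightarrow> - v + w \<in> b \<Longrightarrow> - u + w \<in> b" using sg_add[OF sg, of "- u + v" "- v + w"] by (simp add: add.assoc)
qed

lemma eqv_r: "subgrp b \<Longrightarrow> eqv (Rr b)"
  unfolding eqv_def Rr_def
proof (intro conjI allI impI)
  assume sg: "subgrp b"
  fix v w u
  show "v - v \<in> b" using sg_0[OF sg] by simp
  show "w - v \<in> b \<Longrightarrow> v - w \<in> b" using sg_neg[OF sg, of "w - v"] by (simp add: minus_add)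
  have "w - v + (v - u) = w - u" by (simp add: diff_conv_add_uminus add.assoc del: add_uminus_conv_diff)
  then show "v - u \<in> b \<Longrightarrow> w - v \<in> b \<Longrightarrow> w - u \<in> b" using sg_add[OF sg, of "w - v" "v - u"] by simp
qed

lemma left_Q: "subgrp b \<Longrightarrow> left_cosets b = eqv.QQ (Rl b)"
proof -
  have "(\<lambda>\<beta>. \<omega> + \<beta>) ` b = {w. Rl b \<omega> w}" for \<omega>
  proof (intro equalityI subsetI)
    fix w assume "w \<in> (\<lambda>\<beta>. \<omega> + \<beta>) ` b" then show "w \<in> {w. Rl b \<omega> w}" by (auto simp: Rl_def add.assoc[symmetric])
  next
    fix w assume "w \<in> {w. Rl b \<omega> w}" then have "- \<omega> + w \<in> b" "w = \<omega> + (- \<omega> + w)" by (auto simp: Rl_def add.assoc[symmetric])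
    then show "w \<in> (\<lambda>\<beta>. \<omega> + \<beta>) ` b" by blast
  qed
  moreover assume "subgrp b"
  ultimately show ?thesis unfolding left_cosets_def using eqv.QQ_def[OF eqv_l, of b] by simp
qed

lemma right_Q: "subgrp b \<Longrightarrow> right_cosets b = eqv.QQ (Rr b)"
proof -
  have "(\<lambda>\<beta>. \<beta> + \<omega>) ` b = {w. Rr b \<omega> w}" for \<omega>
  proof (intro equalityI subsetI)
    fix w assume "w \<in> (\<lambda>\<beta>. \<beta> + \<omega>) ` b" then show "w \<in> {w. Rr b \<omega> w}" by (auto simp: Rr_def add.assoc)
  next
    fix w assume "w \<in> {w. Rr b \<omega> w}" then have "w - \<omega> \<in> b" "w = (w - \<omega>) + \<omega>" by (auto simp: Rr_def)
    then show "w \<in> (\<lambda>\<beta>. \<beta> + \<omega>) ` b" by blast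
  qed
  moreover assume "subgrp b"
  ultimately show ?thesis unfolding right_cosets_def using eqv.QQ_def[OF eqv_r, of b] by simp
qed

lemma left_T: "subgrp b \<Longrightarrow> {x. top x b} = {x. eqv.transv (Rl b) x}"
  by (simp add: top_char_l eqv.transv_def[OF eqv_l] Rl_def)

lemma right_T: "subgrp b \<Longrightarrow> {x. top b x} = {x. eqv.transv (Rr b) x}"
  by (simp add: top_char_r eqv.transv_def[OF eqv_r] Rr_def)



lemmas gs = diff_conv_add_uminus minus_add add.assoc

lemma closure_l:
  assumes sg: "subgrp b" and s: "\<sigma> \<in> sections (eqv.QQ (Rl b))" "\<sigma>' \<in> sections (eqv.QQ (Rl b))" "\<sigma>'' \<in> sections (eqv.QQ (Rl b))"
  shows "pointwise_law (eqv.QQ (Rl b)) \<sigma> \<sigma>' \<sigma>'' \<in> sections (eqv.QQ (Rl b))"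
proof -
  interpret E: eqv "Rl b" by (rule eqv_l[OF sg])
  have "\<sigma> C - \<sigma>' C + \<sigma>'' C \<in> C" if C: "C \<in> E.QQ" for C
  proof -
    have e: "C = {w. Rl b (\<sigma> C) w}" using E.inQ_cls[OF C E.sec_in[OF s(1) C]] .
    have "Rl b (\<sigma> C) (\<sigma>' C)" "Rl b (\<sigma> C) (\<sigma>'' C)" using e E.sec_in[OF s(2) C] E.sec_in[OF s(3) C] by blast+
    then have "Rl b (\<sigma>' C) (\<sigma>'' C)" using E.sy E.tr by blast
    then have m: "- (\<sigma>' C) + \<sigma>'' C \<in> b" by (simp add: Rl_def)
    have eq: "- \<sigma> C + (\<sigma> C - \<sigma>' C + \<sigma>'' C) = - (\<sigma>' C) + \<sigma>'' C" by (simp add: gs del: add_uminus_conv_diff)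
    have "Rl b (\<sigma> C) (\<sigma> C - \<sigma>' C + \<sigma>'' C)" unfolding Rl_def eq by (rule m)
    then show ?thesis using e by blast
  qed
  then show ?thesis unfolding sections_def pointwise_law_def by auto
qed

lemma closure_r:
  assumes sg: "subgrp b" and s: "\<sigma> \<in> sections (eqv.QQ (Rr b))" "\<sigma>' \<in> sections (eqv.QQ (Rr b))" "\<sigma>'' \<in> sections (eqv.QQ (Rr b))"
  shows "pointwise_law (eqv.QQ (Rr b)) \<sigma> \<sigma>' \<sigma>'' \<in> sections (eqv.QQ (Rr b))"
proof -
  interpret E: eqv "Rr b" by (rule eqv_r[OF sg])
  have "\<sigma> C - \<sigma>' C + \<sigma>'' C \<in> C" if C: "C \<in> E.QQ" for C
  proof -
    have e: "C = {w. Rr b (\<sigma> C) w}" using E.inQ_cls[OF C E.sec_in[OF s(1) C]] .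
    have "Rr b (\<sigma> C) (\<sigma>' C)" "Rr b (\<sigma> C) (\<sigma>'' C)" using e E.sec_in[OF s(2) C] E.sec_in[OF s(3) C] by blast+
    then have "Rr b (\<sigma>' C) (\<sigma> C)" "Rr b (\<sigma> C) (\<sigma>'' C)" using E.sy by blast+
    then have m: "(\<sigma> C - \<sigma>' C) + (\<sigma>'' C - \<sigma> C) \<in> b" using sg_add[OF sg] by (simp add: Rr_def)
    have eq: "(\<sigma> C - \<sigma>' C + \<sigma>'' C) - \<sigma> C = (\<sigma> C - \<sigma>' C) + (\<sigma>'' C - \<sigma> C)" by (simp add: gs del: add_uminus_conv_diff)
    have "Rr b (\<sigma> C) (\<sigma> C - \<sigma>' C + \<sigma>'' C)" unfolding Rr_def eq by (rule m)
    then show ?thesis using e by blast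
  qed
  then show ?thesis unfolding sections_def pointwise_law_def by auto
qed

lemma hom_l:
  assumes sg: "subgrp b" and s: "\<sigma> \<in> sections (eqv.QQ (Rl b))" "\<sigma>' \<in> sections (eqv.QQ (Rl b))" "\<sigma>'' \<in> sections (eqv.QQ (Rl b))"
  shows "(pointwise_law (eqv.QQ (Rl b)) \<sigma> \<sigma>' \<sigma>'') ` (eqv.QQ (Rl b))
     = Sigma_law b (\<sigma> ` eqv.QQ (Rl b)) (\<sigma>' ` eqv.QQ (Rl b)) (\<sigma>'' ` eqv.QQ (Rl b))"
proof -
  interpret E: eqv "Rl b" by (rule eqv_l[OF sg])
  show ?thesis
  proof (intro equalityI subsetI)
    fix \<omega> assume "\<omega> \<in> pointwise_law E.QQ \<sigma> \<sigma>' \<sigma>'' ` E.QQ"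
    then obtain C where C: "C \<in> E.QQ" and w: "\<omega> = \<sigma> C - \<sigma>' C + \<sigma>'' C" by (auto simp: pointwise_law_def)
    define a where "a = \<sigma> C"
    define a' where "a' = \<sigma>' C"
    define a'' where "a'' = \<sigma>'' C"
    have e: "C = {w. Rl b a w}" using E.inQ_cls[OF C E.sec_in[OF s(1) C]] a_def by simp
    have "Rl b a a'" "Rl b a a''" using e E.sec_in[OF s(2) C] E.sec_in[OF s(3) C] a_def a'_def a''_def by blast+
    then have "Rl b a' a''" "Rl b a a''" using E.sy E.tr by blast+
    then have r1: "- a' + a'' \<in> b" and r2: "- a + a'' \<in> b" by (simp_all add: Rl_def)
    define \<beta> where "\<beta> = - (- a' + a'')"
    define \<beta>' where "\<beta>' = - (- a' + a'') + (- a + a'')"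
    have bb: "\<beta> \<in> b" "\<beta>' \<in> b" unfolding \<beta>_def \<beta>'_def using sg_neg[OF sg r1] sg_add[OF sg sg_neg[OF sg r1] r2] by auto
    have "\<omega> + \<beta> = a" "\<omega> + \<beta>' + \<beta> = a'" "\<omega> + \<beta>' = a''" unfolding w \<beta>_def \<beta>'_def a_def a'_def a''_def
      by (simp_all add: gs del: add_uminus_conv_diff)
    moreover have "a \<in> \<sigma> ` E.QQ" "a' \<in> \<sigma>' ` E.QQ" "a'' \<in> \<sigma>'' ` E.QQ" using C a_def a'_def a''_def by auto
    ultimately show "\<omega> \<in> Sigma_law b (\<sigma> ` E.QQ) (\<sigma>' ` E.QQ) (\<sigma>'' ` E.QQ)"
      unfolding Sigma_law_def using bb by auto
  next
    fix \<omega> assume "\<omega> \<in> Sigma_law b (\<sigma> ` E.QQ) (\<sigma>' ` E.QQ) (\<sigma>'' ` E.QQ)"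
    then obtain \<beta> \<beta>' where bb: "\<beta> \<in> b" "\<beta>' \<in> b"
      and m: "\<omega> + \<beta> \<in> \<sigma> ` E.QQ" "\<omega> + \<beta>' + \<beta> \<in> \<sigma>' ` E.QQ" "\<omega> + \<beta>' \<in> \<sigma>'' ` E.QQ"
      unfolding Sigma_law_def by blast
    from m(1) obtain C1 where C1: "C1 \<in> E.QQ" "\<omega> + \<beta> = \<sigma> C1" by blast
    from m(2) obtain C2 where C2: "C2 \<in> E.QQ" "\<omega> + \<beta>' + \<beta> = \<sigma>' C2" by blast
    from m(3) obtain C3 where C3: "C3 \<in> E.QQ" "\<omega> + \<beta>' = \<sigma>'' C3" by blast
    have R: "Rl b \<omega> (\<omega> + \<beta>)" "Rl b \<omega> (\<omega> + \<beta>' + \<beta>)" "Rl b \<omega> (\<omega> + \<beta>')"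
      using bb sg_add[OF sg bb(2) bb(1)] by (simp_all add: Rl_def add.assoc)
    have "C1 = {w. Rl b \<omega> w}" using E.inQ_cls[OF C1(1) E.sec_in[OF s(1) C1(1)]] C1(2) E.cls_eq[OF R(1)] by simp
    moreover have "C2 = {w. Rl b \<omega> w}" using E.inQ_cls[OF C2(1) E.sec_in[OF s(2) C2(1)]] C2(2) E.cls_eq[OF R(2)] by simp
    moreover have "C3 = {w. Rl b \<omega> w}" using E.inQ_cls[OF C3(1) E.sec_in[OF s(3) C3(1)]] C3(2) E.cls_eq[OF R(3)] by simp
    ultimately have "pointwise_law E.QQ \<sigma> \<sigma>' \<sigma>'' {w. Rl b \<omega> w} = (\<omega> + \<beta>) - (\<omega> + \<beta>' + \<beta>) + (\<omega> + \<beta>')"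
      using C1 C2 C3 E.cls_in by (simp add: pointwise_law_def)
    also have "\<dots> = \<omega>" by (simp add: gs del: add_uminus_conv_diff)
    finally show "\<omega> \<in> pointwise_law E.QQ \<sigma> \<sigma>' \<sigma>'' ` E.QQ" using E.cls_in by (metis image_eqI)
  qed
qed



definition repr :: "'a set \<Rightarrow> 'a set \<Rightarrow> 'a" where "repr y C = (THE \<eta>. \<eta> \<in> y \<and> \<eta> \<in> C)"

definition hmap :: "'a::group_add set \<Rightarrow> 'a set \<Rightarrow> ('a \<Rightarrow> 'a) \<Rightarrow> 'a set \<Rightarrow> 'a" where
  "hmap b y F = (\<lambda>C\<in>eqv.QQ (Rl b). repr y C + F (repr y C))"

lemma map_iso:
  assumes sg: "subgrp b" and ty: "top y b"
  shows "torsor_iso (y \<rightarrow>\<^sub>E b) (pointwise_law y) (sections (eqv.QQ (Rl b))) (pointwise_law (eqv.QQ (Rl b))) (hmap b y)"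
    and "\<And>F. F \<in> y \<rightarrow>\<^sub>E b \<Longrightarrow> hmap b y F ` eqv.QQ (Rl b) = {\<eta> + F \<eta> | \<eta>. \<eta> \<in> y}"
proof -
  interpret E: eqv "Rl b" by (rule eqv_l[OF sg])
  have t: "E.transv y" using left_T[OF sg] ty by blast
  have rp: "C \<in> E.QQ \<Longrightarrow> repr y C \<in> y \<and> repr y C \<in> C" for C
    unfolding repr_def using theI'[OF E.transv_unique[OF t]] by simp
  have rc: "\<eta> \<in> y \<Longrightarrow> repr y {w. Rl b \<eta> w} = \<eta>" for \<eta>
    unfolding repr_def using E.rf by (intro the1_equality[OF E.transv_unique[OF t E.cls_in]]) auto
  have cr: "C \<in> E.QQ \<Longrightarrow> {w. Rl b (repr y C) w} = C" for C
    using E.inQ_cls rp by metis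
  have hc: "\<eta> \<in> y \<Longrightarrow> hmap b y F {w. Rl b \<eta> w} = \<eta> + F \<eta>" for \<eta> F
    unfolding hmap_def using rc E.cls_in by simp
  show "F \<in> y \<rightarrow>\<^sub>E b \<Longrightarrow> hmap b y F ` E.QQ = {\<eta> + F \<eta> | \<eta>. \<eta> \<in> y}" for F
  proof (intro equalityI subsetI)
    fix v assume "v \<in> hmap b y F ` E.QQ"
    then obtain C where "C \<in> E.QQ" "v = hmap b y F C" by blast
    then show "v \<in> {\<eta> + F \<eta> | \<eta>. \<eta> \<in> y}" using rp unfolding hmap_def by auto
  next
    fix v assume "v \<in> {\<eta> + F \<eta> | \<eta>. \<eta> \<in> y}"
    then obtain \<eta> where "\<eta> \<in> y" "v = \<eta> + F \<eta>" by blast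
    then show "v \<in> hmap b y F ` E.QQ" using hc E.cls_in by (metis image_eqI)
  qed
  have inj: "inj_on (hmap b y) (y \<rightarrow>\<^sub>E b)"
  proof (rule inj_onI)
    fix F F' assume F: "F \<in> y \<rightarrow>\<^sub>E b" "F' \<in> y \<rightarrow>\<^sub>E b" and e: "hmap b y F = hmap b y F'"
    show "F = F'"
    proof (rule ext)
      fix \<eta> show "F \<eta> = F' \<eta>"
      proof (cases "\<eta> \<in> y")
        case True then show ?thesis using hc[OF True, of F] hc[OF True, of F'] e by simp
      next
        case False then show ?thesis using F by (simp add: PiE_def extensional_def)
      qed
    qed
  qed
  have img: "hmap b y ` (y \<rightarrow>\<^sub>E b) = sections E.QQ"
  proof (intro equalityI subsetI)
    fix \<sigma> assume "\<sigma> \<in> hmap b y ` (y \<rightarrow>\<^sub>E b)"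
    then obtain F where F: "F \<in> y \<rightarrow>\<^sub>E b" and s: "\<sigma> = hmap b y F" by blast
    have "repr y C + F (repr y C) \<in> C" if C: "C \<in> E.QQ" for C
    proof -
      have "F (repr y C) \<in> b" using F rp[OF C] by auto
      then have "Rl b (repr y C) (repr y C + F (repr y C))" by (simp add: Rl_def add.assoc[symmetric])
      then show ?thesis using cr[OF C] by blast
    qed
    then show "\<sigma> \<in> sections E.QQ" unfolding s sections_def hmap_def by auto
  next
    fix \<sigma> assume s: "\<sigma> \<in> sections E.QQ"
    define F where "F = (\<lambda>\<eta>\<in>y. - \<eta> + \<sigma> {w. Rl b \<eta> w})"
    have k: "- \<eta> + \<sigma> {w. - \<eta> + w \<in> b} \<in> b" for \<eta>
      using E.sec_in[OF s E.cls_in, of \<eta>] unfolding mem_Collect_eq Rl_def .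
    have "F \<in> y \<rightarrow>\<^sub>E b" unfolding F_def Rl_def using k by auto
    moreover have "hmap b y F = \<sigma>"
    proof (rule ext)
      fix C show "hmap b y F C = \<sigma> C"
      proof (cases "C \<in> E.QQ")
        case True then show ?thesis using rp[OF True] cr[OF True] unfolding hmap_def F_def
          by (simp add: add.assoc[symmetric])
      next
        case False then show ?thesis using s unfolding hmap_def sections_def by (auto simp: PiE_def extensional_def)
      qed
    qed
    ultimately show "\<sigma> \<in> hmap b y ` (y \<rightarrow>\<^sub>E b)" by blast
  qed
  have hom: "hmap b y (pointwise_law y F F' F'') = pointwise_law E.QQ (hmap b y F) (hmap b y F') (hmap b y F'')"
    if "F \<in> y \<rightarrow>\<^sub>E b" "F' \<in> y \<rightarrow>\<^sub>E b" "F'' \<in> y \<rightarrow>\<^sub>E b" for F F' F''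
  proof (rule ext)
    fix C show "hmap b y (pointwise_law y F F' F'') C = pointwise_law E.QQ (hmap b y F) (hmap b y F') (hmap b y F'') C"
    proof (cases "C \<in> E.QQ")
      case True then show ?thesis using rp[OF True] unfolding hmap_def pointwise_law_def
        by (simp add: gs del: add_uminus_conv_diff)
    next
      case False then show ?thesis unfolding hmap_def pointwise_law_def by simp
    qed
  qed
  show "torsor_iso (y \<rightarrow>\<^sub>E b) (pointwise_law y) (sections E.QQ) (pointwise_law E.QQ) (hmap b y)"
    unfolding torsor_iso_def bij_betw_def using inj img hom by blast
qed



theorem theorem5p1:
  fixes b y :: "'a::group_add set"
  assumes "subgrp b" and "top y b"
  shows "(\<forall>x\<in>{x. top x b}. \<forall>u\<in>{x. top x b}. \<forall>z\<in>{x. top x b}.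
            Sigma_law b x u z \<in> {x. top x b})
    \<and> torsor_on {x. top x b} (Sigma_law b)
    \<and> torsor_on (sections (left_cosets b)) (pointwise_law (left_cosets b))
    \<and> torsor_iso (sections (left_cosets b)) (pointwise_law (left_cosets b))
                 {x. top x b} (Sigma_law b) (\<lambda>\<sigma>. \<sigma> ` left_cosets b)
    \<and> torsor_on (y \<rightarrow>\<^sub>E b) (pointwise_law y)
    \<and> torsor_iso (y \<rightarrow>\<^sub>E b) (pointwise_law y) {x. top x b} (Sigma_law b)
                 (\<lambda>F. {\<eta> + F \<eta> | \<eta>. \<eta> \<in> y})
    \<and> torsor_on (sections (right_cosets b)) (pointwise_law (right_cosets b))
    \<and> (\<exists>m. torsor_on {x. top b x} m
         \<and> torsor_iso (sections (right_cosets b)) (pointwise_law (right_cosets b))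
                      {x. top b x} m (\<lambda>\<sigma>. \<sigma> ` right_cosets b))"
proof -
  note sg = assms(1)
  interpret L: eqv "Rl b" by (rule eqv_l[OF sg])
  interpret R: eqv "Rr b" by (rule eqv_r[OF sg])
  have QL: "left_cosets b = L.QQ" by (rule left_Q[OF sg])
  have QR: "right_cosets b = R.QQ" by (rule right_Q[OF sg])
  have TL: "{x. top x b} = {x. L.transv x}" by (rule left_T[OF sg])
  have TR: "{x. top b x} = {x. R.transv x}" by (rule right_T[OF sg])
  have SL: "torsor_on (sections L.QQ) (pointwise_law L.QQ)"
    by (rule pointwise_torsor[OF L.sections_ext closure_l[OF sg]])
  have SR: "torsor_on (sections R.QQ) (pointwise_law R.QQ)"
    by (rule pointwise_torsor[OF R.sections_ext closure_r[OF sg]])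
  have IL: "torsor_iso (sections L.QQ) (pointwise_law L.QQ) {x. L.transv x} (Sigma_law b) (\<lambda>\<sigma>. \<sigma> ` L.QQ)"
    unfolding torsor_iso_def using L.bij hom_l[OF sg] closure_l[OF sg] by auto
  have TLt: "torsor_on {x. L.transv x} (Sigma_law b)" by (rule transport[OF SL IL])
  have mapcl: "pointwise_law y F F' F'' \<in> y \<rightarrow>\<^sub>E b"
    if "F \<in> y \<rightarrow>\<^sub>E b" "F' \<in> y \<rightarrow>\<^sub>E b" "F'' \<in> y \<rightarrow>\<^sub>E b" for F F' F''
  proof -
    have "F \<eta> - F' \<eta> + F'' \<eta> \<in> b" if e: "\<eta> \<in> y" for \<eta>
    proof -
      have "F \<eta> \<in> b" "F' \<eta> \<in> b" "F'' \<eta> \<in> b" using PiE_mem[OF \<open>F \<in> y \<rightarrow>\<^sub>E b\<close> e]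
        PiE_mem[OF \<open>F' \<in> y \<rightarrow>\<^sub>E b\<close> e] PiE_mem[OF \<open>F'' \<in> y \<rightarrow>\<^sub>E b\<close> e] by auto
      then show ?thesis unfolding diff_conv_add_uminus using sg_add[OF sg] sg_neg[OF sg] by blast
    qed
    then show ?thesis unfolding pointwise_law_def by auto
  qed
  have MT: "torsor_on (y \<rightarrow>\<^sub>E b) (pointwise_law y)"
    by (rule pointwise_torsor[OF _ mapcl]) (auto simp: PiE_def)
  have MI: "torsor_iso (y \<rightarrow>\<^sub>E b) (pointwise_law y) {x. L.transv x} (Sigma_law b) (\<lambda>F. {\<eta> + F \<eta> | \<eta>. \<eta> \<in> y})"
    by (rule iso_comp[OF map_iso(1)[OF sg assms(2)] IL]) (auto simp: map_iso(2)[OF sg assms(2)] mapcl)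
  define f where "f = (\<lambda>\<sigma>::'a set \<Rightarrow> 'a. \<sigma> ` R.QQ)"
  define g where "g = inv_into (sections R.QQ) f"
  define m where "m = (\<lambda>x u z. f (pointwise_law R.QQ (g x) (g u) (g z)))"
  have bR: "bij_betw f (sections R.QQ) {x. R.transv x}" unfolding f_def by (rule R.bij)
  have gf: "\<sigma> \<in> sections R.QQ \<Longrightarrow> g (f \<sigma>) = \<sigma>" for \<sigma>
    unfolding g_def using bR by (simp add: bij_betw_def inv_into_f_f)
  have IR: "torsor_iso (sections R.QQ) (pointwise_law R.QQ) {x. R.transv x} m f"
    unfolding torsor_iso_def m_def using bR gf by auto
  have TRt: "torsor_on {x. R.transv x} m" by (rule transport[OF SR IR])
  have C1: "\<forall>x\<in>{x. L.transv x}. \<forall>u\<in>{x. L.transv x}. \<forall>z\<in>{x. L.transv x}. Sigma_law b x u z \<in> {x. L.transv x}"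
    using TLt unfolding torsor_on_def by (rule conjunct1)
  have IR': "torsor_iso (sections R.QQ) (pointwise_law R.QQ) {x. R.transv x} m (\<lambda>\<sigma>. \<sigma> ` R.QQ)"
    using IR unfolding f_def .
  show ?thesis
    unfolding QL QR TL TR
    apply (intro conjI)
           apply (rule C1)
          apply (rule TLt)
         apply (rule SL)
        apply (rule IL)
       apply (rule MT)
      apply (rule MI)
     apply (rule SR)
    apply (rule exI[of _ m])
    apply (intro conjI)
     apply (rule TRt)
    apply (rule IR')
    done
qed


end
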